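(* Let $A$ and $B$ be commutative groups. (a) If $B$ is trivial, then $\mathcal D(A,B)=\{-\infty\}$. (b) If $A$ is trivial and $B$ is nontrivial, then $\mathcal D(A,B)=\{-\infty,0\}$. (c) If $A$ and $B$ are both nontrivial, then $\mathcal D(A,B)\setminus\{\infty\}=\{n\in\{-\infty\}\cup\mathbb N: n\le\delta^\circ(A,B)\}$.
   Context: For commutative groups $A,B$, $B^A$ denotes the commutative group (under pointwise addition) of all maps $A\to B$. For $a\in A$, the difference operator $\Delta_a:B^A\to B^A$ is $(\Delta_a f)(x)=f(x+a)-f(x)$. Let $\widetilde{\mathbb N}=\mathbb N\cup\{-\infty,\infty\}$ ($\mathbb N=\{0,1,2,\dots\}$), totally ordered with $-\infty$ least and $\infty$ greatest. The functional degree $\operatorname{fdeg}(f)\in\widetilde{\mathbb N}$ of $f\in B^A$ is: $-\infty$ if $f=0$; otherwise the least $n\in\mathbb N$ such that $\Delta_{a_1}\cdots\Delta_{a_{n+1}}f=0$ for all $a_1,\dots,a_{n+1}\in A$; and $\infty$ if no such $n$ exists. $\mathcal D(A,B)=\{\operatorname{fdeg}(f):f\in B^A\}$, and $\delta^\circ(A,B)=\sup\{\operatorname{fdeg}(f): f\in B^A,\ \operatorname{fdeg}(f)<\infty\}$ (supremum in $\widetilde{\mathbb N}$). *)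

theory Defs
  imports Main "HOL-Library.Extended_Nat" "HOL-Library.Option_ord"
begin

text \<open>Extended naturals N u {-infinity, infinity}: None = -infinity, Some (enat n) = n,
  Some infinity = +infinity, with the order None < Some _ (Option_ord).\<close>
type_synonym xnat = "enat option"

abbreviation NegInf :: xnat where "NegInf \<equiv> None"
abbreviation PosInf :: xnat where "PosInf \<equiv> Some \<infinity>"
abbreviation Fin :: "nat \<Rightarrow> xnat" where "Fin n \<equiv> Some (enat n)"

definition Delta :: "'a::ab_group_add \<Rightarrow> ('a \<Rightarrow> 'b::ab_group_add) \<Rightarrow> ('a \<Rightarrow> 'b)" where
  "Delta a f = (\<lambda>x. f (x + a) - f x)"

definition Deltas :: "'a::ab_group_add list \<Rightarrow> ('a \<Rightarrow> 'b::ab_group_add) \<Rightarrow> ('a \<Rightarrow> 'b)" where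
  "Deltas as f = foldr Delta as f"

definition kills :: "nat \<Rightarrow> ('a::ab_group_add \<Rightarrow> 'b::ab_group_add) \<Rightarrow> bool" where
  "kills n f \<longleftrightarrow> (\<forall>as. length as = Suc n \<longrightarrow> Deltas as f = (\<lambda>_. 0))"

definition fdeg :: "('a::ab_group_add \<Rightarrow> 'b::ab_group_add) \<Rightarrow> xnat" where
  "fdeg f = (if f = (\<lambda>_. 0) then NegInf
             else if \<exists>n. kills n f then Fin (LEAST n. kills n f)
             else PosInf)"

definition Dset :: "'a::ab_group_add itself \<Rightarrow> 'b::ab_group_add itself \<Rightarrow> xnat set" where
  "Dset _ _ = range (fdeg :: ('a \<Rightarrow> 'b) \<Rightarrow> xnat)"

definition delta0 :: "'a::ab_group_add itself \<Rightarrow> 'b::ab_group_add itself \<Rightarrow> xnat" where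
  "delta0 _ _ = Sup {fdeg f | f :: 'a \<Rightarrow> 'b. fdeg f < PosInf}"

end

theory Submission
  imports Defs
begin

lemma Deltas_zero: "Deltas as (\<lambda>_::'a::ab_group_add. 0 :: 'b::ab_group_add) = (\<lambda>_. 0)"
  by (induction as) (auto simp: Deltas_def Delta_def)

lemma Deltas_Cons: "Deltas (a # as) f = Delta a (Deltas as f)"
  by (simp add: Deltas_def)

lemma Deltas_snoc: "Deltas (as @ [a]) f = Deltas as (Delta a f)"
  by (simp add: Deltas_def)

lemma kills_Suc: "kills n f \<Longrightarrow> kills (Suc n) f"
  unfolding kills_def
proof (intro allI impI)
  fix as :: "'a list"
  assume k: "\<forall>as. length as = Suc n \<longrightarrow> Deltas as f = (\<lambda>_. 0)" and l: "length as = Suc (Suc n)"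
  then obtain a bs where "as = a # bs" "length bs = Suc n" by (cases as) auto
  then show "Deltas as f = (\<lambda>_. 0)" using k by (simp add: Deltas_Cons Delta_def)
qed

lemma kills_mono: "kills n f \<Longrightarrow> n \<le> m \<Longrightarrow> kills m f"
proof (induction m)
  case 0 then show ?case by simp
next
  case (Suc m) then show ?case using kills_Suc by (cases "n = Suc m") auto
qed

lemma fdeg_FinI:
  assumes "f \<noteq> (\<lambda>_. 0)" "kills n f" "\<And>k. k < n \<Longrightarrow> \<not> kills k f"
  shows "fdeg f = Fin n"
proof -
  have "(LEAST n. kills n f) = n"
    by (rule Least_equality) (use assms in \<open>auto simp: not_less[symmetric]\<close>)
  then show ?thesis using assms by (auto simp: fdeg_def)
qed

lemma fdeg_FinD:
  assumes "fdeg f = Fin n"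
  shows "f \<noteq> (\<lambda>_. 0) \<and> kills n f \<and> (\<forall>k<n. \<not> kills k f)"
proof -
  have nz: "f \<noteq> (\<lambda>_. 0)" using assms by (auto simp: fdeg_def split: if_splits)
  have ex: "\<exists>n. kills n f" using assms nz by (auto simp: fdeg_def split: if_splits)
  have L: "(LEAST n. kills n f) = n" using assms nz ex by (auto simp: fdeg_def)
  show ?thesis using nz LeastI_ex[OF ex] not_less_Least[of _ "\<lambda>n. kills n f"] L by auto
qed

lemma fdeg_step:
  fixes f :: "'a::ab_group_add \<Rightarrow> 'b::ab_group_add"
  assumes "fdeg f = Fin (Suc n)"
  shows "\<exists>g :: 'a \<Rightarrow> 'b. fdeg g = Fin n"
proof -
  from fdeg_FinD[OF assms] have nz: "f \<noteq> (\<lambda>_. 0)" and kf: "kills (Suc n) f" and nk: "\<not> kills n f"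
    by auto
  from nk obtain as where las: "length as = Suc n" and d: "Deltas as f \<noteq> (\<lambda>_. 0)"
    unfolding kills_def by auto
  obtain bs a where asd: "as = bs @ [a]" using las by (cases as rule: rev_cases) auto
  have lbs: "length bs = n" using las asd by simp
  define g where "g = Delta a f"
  have dg: "Deltas bs g \<noteq> (\<lambda>_. 0)" using d asd by (simp add: Deltas_snoc g_def)
  have gnz: "g \<noteq> (\<lambda>_. 0)" using dg Deltas_zero by metis
  have kg: "kills n g"
    unfolding kills_def
  proof (intro allI impI)
    fix cs :: "'a list" assume "length cs = Suc n"
    then have "Deltas (cs @ [a]) f = (\<lambda>_. 0)" using kf unfolding kills_def by simp
    then show "Deltas cs g = (\<lambda>_. 0)" by (simp add: Deltas_snoc g_def)
  qed
  have nkg: "\<not> kills k g" if "k < n" for k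
  proof
    assume "kills k g"
    then have "kills (n - 1) g" by (rule kills_mono) (use that in auto)
    then have "Deltas bs g = (\<lambda>_. 0)" using lbs that unfolding kills_def by simp
    with dg show False by simp
  qed
  show ?thesis using fdeg_FinI[OF gnz kg nkg] by blast
qed

lemma fdeg_down:
  fixes f :: "'a::ab_group_add \<Rightarrow> 'b::ab_group_add"
  shows "fdeg f = Fin m \<Longrightarrow> k \<le> m \<Longrightarrow> \<exists>g :: 'a \<Rightarrow> 'b. fdeg g = Fin k"
proof (induction m arbitrary: f)
  case 0 then show ?case by auto
next
  case (Suc m)
  show ?case
  proof (cases "k = Suc m")
    case True then show ?thesis using Suc by blast
  next
    case False
    from fdeg_step[OF Suc.prems(1)] obtain g :: "'a \<Rightarrow> 'b" where "fdeg g = Fin m" by blast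
    then show ?thesis using Suc.IH False Suc.prems(2) by auto
  qed
qed

lemma fdeg_zero: "fdeg (\<lambda>_. 0 :: 'b::ab_group_add) = NegInf"
  by (simp add: fdeg_def)

lemma fdeg_const:
  fixes c :: "'b::ab_group_add"
  assumes "c \<noteq> 0"
  shows "fdeg (\<lambda>_::'a::ab_group_add. c) = Fin 0"
proof (rule fdeg_FinI)
  show "(\<lambda>_::'a. c) \<noteq> (\<lambda>_. 0)" using assms by (metis)
  show "kills 0 (\<lambda>_::'a. c)"
    unfolding kills_def
  proof (intro allI impI)
    fix as :: "'a list" assume "length as = Suc 0"
    then obtain a where "as = [a]" by (cases as) auto
    then show "Deltas as (\<lambda>_. c) = (\<lambda>_. 0)" by (simp add: Deltas_def Delta_def)
  qed
qed auto

lemma opt_lt_Suc: "(x::xnat) < Fin (Suc j) \<Longrightarrow> x \<le> Fin j"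
proof (cases x)
  case (Some e)
  assume "x < Fin (Suc j)"
  then have "e < enat (Suc j)" using Some by simp
  then have "e \<le> enat j" by (cases e) auto
  then show ?thesis using Some by simp
qed simp

lemma nontriv: "(UNIV :: 'b::ab_group_add set) \<noteq> {0} \<Longrightarrow> \<exists>c::'b. c \<noteq> 0"
  by auto

theorem lemma2:
  shows "((UNIV :: 'b::ab_group_add set) = {0} \<longrightarrow>
            Dset TYPE('a::ab_group_add) TYPE('b) = {NegInf})
       \<and> ((UNIV :: 'a set) = {0} \<and> (UNIV :: 'b set) \<noteq> {0} \<longrightarrow>
            Dset TYPE('a) TYPE('b) = {NegInf, Fin 0})
       \<and> ((UNIV :: 'a set) \<noteq> {0} \<and> (UNIV :: 'b set) \<noteq> {0} \<longrightarrow>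
            Dset TYPE('a) TYPE('b) - {PosInf} =
              {n. (n = NegInf \<or> (\<exists>k. n = Fin k)) \<and> n \<le> delta0 TYPE('a) TYPE('b)})"
proof (intro conjI impI)
  assume B: "(UNIV :: 'b set) = {0}"
  have "\<And>f::'a \<Rightarrow> 'b. f = (\<lambda>_. 0)" using B by auto
  then show "Dset TYPE('a) TYPE('b) = {NegInf}"
    by (auto simp: Dset_def fdeg_def)
next
  assume AB: "(UNIV :: 'a set) = {0} \<and> (UNIV :: 'b set) \<noteq> {0}"
  then obtain c :: 'b where c: "c \<noteq> 0" by auto
  have k0: "kills 0 (f :: 'a \<Rightarrow> 'b)" for f
    unfolding kills_def
  proof (intro allI impI)
    fix as :: "'a list" assume "length as = Suc 0"
    then obtain a where "as = [a]" by (cases as) auto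
    moreover have "a = 0" using AB by auto
    ultimately show "Deltas as f = (\<lambda>_. 0)" by (simp add: Deltas_def Delta_def)
  qed
  have F: "fdeg f \<in> {NegInf, Fin 0}" for f :: "'a \<Rightarrow> 'b"
  proof (cases "f = (\<lambda>_. 0)")
    case True then show ?thesis by (simp add: fdeg_def)
  next
    case False then show ?thesis using fdeg_FinI[OF False k0] by auto
  qed
  have N: "NegInf \<in> range (fdeg :: ('a \<Rightarrow> 'b) \<Rightarrow> xnat)"
    using fdeg_zero[where 'a='a and 'b='b] by (metis rangeI)
  have Z: "Fin 0 \<in> range (fdeg :: ('a \<Rightarrow> 'b) \<Rightarrow> xnat)"
    using fdeg_const[OF c, where 'a='a] by (metis rangeI)
  show "Dset TYPE('a) TYPE('b) = {NegInf, Fin 0}"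
    unfolding Dset_def
  proof (intro equalityI subsetI)
    fix x assume "x \<in> range (fdeg :: ('a \<Rightarrow> 'b) \<Rightarrow> xnat)"
    then obtain f :: "'a \<Rightarrow> 'b" where "x = fdeg f" by blast
    then show "x \<in> {NegInf, Fin 0}" using F by simp
  next
    fix x assume "x \<in> {NegInf, Fin 0}"
    then show "x \<in> range (fdeg :: ('a \<Rightarrow> 'b) \<Rightarrow> xnat)" using N Z by blast
  qed
next
  assume AB: "(UNIV :: 'a set) \<noteq> {0} \<and> (UNIV :: 'b set) \<noteq> {0}"
  then obtain c :: 'b where c: "c \<noteq> 0" by auto
  let ?S = "{fdeg f | f :: 'a \<Rightarrow> 'b. fdeg f < PosInf}"
  have dd: "delta0 TYPE('a) TYPE('b) = Sup ?S" by (simp add: delta0_def)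
  show "Dset TYPE('a) TYPE('b) - {PosInf} =
              {n. (n = NegInf \<or> (\<exists>k. n = Fin k)) \<and> n \<le> delta0 TYPE('a) TYPE('b)}"
  proof (rule set_eqI, rule iffI)
    fix n assume "n \<in> Dset TYPE('a) TYPE('b) - {PosInf}"
    then obtain f :: "'a \<Rightarrow> 'b" where n: "n = fdeg f" and np: "n \<noteq> PosInf"
      by (auto simp: Dset_def)
    have form: "n = NegInf \<or> (\<exists>k. n = Fin k)" using np n unfolding fdeg_def by (auto split: if_splits)
    have "n < PosInf" using form by auto
    then have "n \<in> ?S" using n by auto
    then have "n \<le> Sup ?S" by (rule Sup_upper)
    then show "n \<in> {n. (n = NegInf \<or> (\<exists>k. n = Fin k)) \<and> n \<le> delta0 TYPE('a) TYPE('b)}"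
      using form dd by simp
  next
    fix n assume "n \<in> {n. (n = NegInf \<or> (\<exists>k. n = Fin k)) \<and> n \<le> delta0 TYPE('a) TYPE('b)}"
    then have form: "n = NegInf \<or> (\<exists>k. n = Fin k)" and le: "n \<le> Sup ?S" using dd by auto
    have "\<exists>f :: 'a \<Rightarrow> 'b. fdeg f = n"
    proof (cases "n = NegInf")
      case True then show ?thesis using fdeg_zero by blast
    next
      case False
      then obtain k where k: "n = Fin k" using form by auto
      show ?thesis
      proof (cases k)
        case 0 then show ?thesis using k fdeg_const[OF c] by blast
      next
        case (Suc j)
        have "\<exists>f :: 'a \<Rightarrow> 'b. fdeg f < PosInf \<and> Fin k \<le> fdeg f"
        proof (rule ccontr)
          assume "\<not> ?thesis"
          then have "\<forall>x\<in>?S. x \<le> Fin j" using Suc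
            by (auto simp: not_le intro: opt_lt_Suc)
          then have sj: "Sup ?S \<le> Fin j" by (intro Sup_least) auto
          have "Fin (Suc j) \<le> Sup ?S" using le k Suc by simp
          from order_trans[OF this sj] have "enat (Suc j) \<le> enat j" by simp
          then show False by simp
        qed
        then obtain f :: "'a \<Rightarrow> 'b" where f1: "fdeg f < PosInf" and f2: "Fin k \<le> fdeg f" by blast
        then obtain m where m: "fdeg f = Fin m"
          by (cases "fdeg f") (auto simp: less_eq_option_def)
        then have "k \<le> m" using f2 by simp
        then show ?thesis using fdeg_down[OF m] k by blast
      qed
    qed
    then show "n \<in> Dset TYPE('a) TYPE('b) - {PosInf}"
      using form by (auto simp: Dset_def)
  qed
qed

end
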